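(* Let $\lambda=(n_1,n_2)$ be a two-row shape with $n_1\ge n_2\ge 2$, and let $\rho$ be a density on $\lambda$ with positive entries $\rho_{1,j}=a_j$ ($1\le j\le n_1$) and $\rho_{2,j}=b_j$ ($1\le j\le n_2$). Let $\lambda'=(n_1-1,n_2-1)$ and, for $0\le i\le b_1$, let $\rho'_i$ be the density on $\lambda'$ with first row $(a_2,a_3,\dots,a_{n_1})$ and second row $(b_1+b_2-i,\,b_3,\dots,b_{n_2})$. Then $$|\mathrm{SVT}(\lambda,\rho)|=\sum_{i=0}^{b_1}\binom{a_2+i-1}{i}\,|\mathrm{SVT}(\lambda',\rho'_i)|.$$
   Context: A density on a shape $\lambda$ is an assignment of a nonnegative integer $\rho_{i,j}$ to every cell $(i,j)$ (row $i$, column $j$); let $N=\sum\rho_{i,j}$. A standard set-valued Young tableau of shape $\lambda$ and density $\rho$ assigns to each cell $(i,j)$ a set $S_{i,j}$ with $|S_{i,j}|=\rho_{i,j}$, the sets partitioning $[N]$, such that every element of $S_{i,j}$ is smaller than every element of $S_{i,j+1}$ and of $S_{i+1,j}$ whenever those cells exist. $\mathrm{SVT}(\lambda,\rho)$ is the set of these tableaux. *)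

theory Defs
  imports Main
begin

definition cells :: "nat list \<Rightarrow> (nat \<times> nat) set" where
  "cells lam = {(i, j). 1 \<le> i \<and> i \<le> length lam \<and> 1 \<le> j \<and> j \<le> lam ! (i - 1)}"

text \<open>A density is a function rho on cells (values outside cells are ignored).\<close>
definition SVT :: "nat list \<Rightarrow> (nat \<times> nat \<Rightarrow> nat) \<Rightarrow> (nat \<times> nat \<Rightarrow> nat set) set" where
  "SVT lam rho = {S.
     (\<forall>c. c \<notin> cells lam \<longrightarrow> S c = {}) \<and>
     (\<forall>c\<in>cells lam. finite (S c) \<and> card (S c) = rho c) \<and>
     (\<forall>c\<in>cells lam. \<forall>d\<in>cells lam. c \<noteq> d \<longrightarrow> S c \<inter> S d = {}) \<and>
     (\<Union>c\<in>cells lam. S c) = {1..(\<Sum>c\<in>cells lam. rho c)} \<and>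
     (\<forall>i j. (i, j) \<in> cells lam \<longrightarrow>
        (\<forall>x\<in>S (i, j).
           ((i, j + 1) \<in> cells lam \<longrightarrow> (\<forall>y\<in>S (i, j + 1). x < y)) \<and>
           ((i + 1, j) \<in> cells lam \<longrightarrow> (\<forall>y\<in>S (i + 1, j). x < y))))}"

end

theory Submission
  imports Defs
begin


definition prec :: "nat \<times> nat \<Rightarrow> nat \<times> nat \<Rightarrow> bool" where
  "prec c d \<longleftrightarrow> (fst d = fst c \<and> snd d = Suc (snd c)) \<or> (fst d = Suc (fst c) \<and> snd d = snd c)"

fun bef :: "'a \<Rightarrow> 'a \<Rightarrow> 'a list \<Rightarrow> bool" where
  "bef c d [] = True"
| "bef c d (x # xs) = ((x = d \<longrightarrow> c \<notin> set xs) \<and> bef c d xs)"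

definition W :: "nat list \<Rightarrow> (nat \<times> nat \<Rightarrow> nat) \<Rightarrow> (nat \<times> nat) list set" where
  "W lam rho = {w. set w \<subseteq> cells lam \<and> (\<forall>c\<in>cells lam. count_list w c = rho c)
      \<and> (\<forall>c d. prec c d \<longrightarrow> bef c d w)}"

lemma bef_append: "bef c d (xs @ ys) \<longleftrightarrow> bef c d xs \<and> bef c d ys \<and> (d \<in> set xs \<longrightarrow> c \<notin> set ys)"
  by (induction xs) auto

lemma bef_notin1: "c \<notin> set xs \<Longrightarrow> bef c d xs"
  by (induction xs) auto

lemma bef_notin2: "d \<notin> set xs \<Longrightarrow> bef c d xs"
  by (induction xs) auto

lemma bef_trans: "bef c d w \<Longrightarrow> bef d e w \<Longrightarrow> d \<in> set w \<Longrightarrow> bef c e w"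
proof (induction w)
  case Nil then show ?case by simp
next
  case (Cons x xs)
  show ?case
  proof (cases "d \<in> set xs")
    case True then show ?thesis using Cons by auto
  next
    case False
    then have "x = d" using Cons by auto
    then have "c \<notin> set xs" using Cons by auto
    then show ?thesis using bef_notin1 by auto
  qed
qed

lemma bef_nth: "c \<noteq> d \<Longrightarrow> bef c d w \<longleftrightarrow> (\<forall>p<length w. \<forall>q<length w. w!p = c \<longrightarrow> w!q = d \<longrightarrow> p < q)"
proof (induction w)
  case Nil then show ?case by simp
next
  case (Cons x xs)
  show ?case
  proof
    assume h: "bef c d (x # xs)"
    show "\<forall>p<length (x#xs). \<forall>q<length (x#xs). (x#xs)!p = c \<longrightarrow> (x#xs)!q = d \<longrightarrow> p < q"
    proof (intro allI impI)
      fix p q assume p: "p < length (x#xs)" and q: "q < length (x#xs)" and pc: "(x#xs)!p = c" and qd: "(x#xs)!q = d"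
      show "p < q"
      proof (cases q)
        case 0 then have "x = d" using qd by simp
        then have "c \<notin> set xs" using h by simp
        moreover have "p \<noteq> 0" using pc \<open>x = d\<close> Cons.prems by (metis nth_Cons_0)
        ultimately show ?thesis using p pc by (metis "0" Suc_less_eq length_Cons not_gr_zero not0_implies_Suc nth_Cons_Suc nth_mem)
      next
        case (Suc q') 
        show ?thesis
        proof (cases p)
          case 0 then show ?thesis using Suc by simp
        next
          case (Suc p')
          then show ?thesis using \<open>q = Suc q'\<close> Cons h p q pc qd by auto
        qed
      qed
    qed
  next
    assume h: "\<forall>p<length (x#xs). \<forall>q<length (x#xs). (x#xs)!p = c \<longrightarrow> (x#xs)!q = d \<longrightarrow> p < q"
    have "bef c d xs" using Cons.IH Cons.prems h
      by (metis Suc_less_eq length_Cons nth_Cons_Suc)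
    moreover have "x = d \<longrightarrow> c \<notin> set xs"
    proof
      assume "x = d"
      show "c \<notin> set xs"
      proof
        assume "c \<in> set xs"
        then obtain p where "p < length xs" "xs!p = c" by (metis in_set_conv_nth)
        then show False using h[rule_format, of "Suc p" 0] \<open>x = d\<close> by simp
      qed
    qed
    ultimately show "bef c d (x#xs)" by simp
  qed
qed

lemma finite_cells: "finite (cells lam)"
proof -
  have "cells lam \<subseteq> {..length lam} \<times> {..sum_list lam}"
  proof
    fix c assume "c \<in> cells lam"
    then obtain i j where c: "c = (i,j)" "1 \<le> i" "i \<le> length lam" "j \<le> lam ! (i - 1)"
      unfolding cells_def by auto
    then have "lam ! (i-1) \<in> set lam" by auto
    then have "lam ! (i-1) \<le> sum_list lam" by (rule member_le_sum_list) auto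
    then show "c \<in> {..length lam} \<times> {..sum_list lam}" using c by auto
  qed
  then show ?thesis by (rule finite_subset) auto
qed

lemma count_card: "count_list w c = card {k\<in>{1..length w}. w!(k-1) = c}"
proof -
  have "count_list w c = card {i. i < length w \<and> c = w!i}"
    by (simp add: count_list_eq_length_filter length_filter_conv_card)
  also have "\<dots> = card (Suc ` {i. i < length w \<and> c = w!i})" by (simp add: card_image)
  also have "Suc ` {i. i < length w \<and> c = w!i} = {k\<in>{1..length w}. w!(k-1) = c}"
  proof (rule set_eqI, rule iffI)
    fix k assume "k \<in> Suc ` {i. i < length w \<and> c = w!i}"
    then show "k \<in> {k\<in>{1..length w}. w!(k-1) = c}" by auto
  next
    fix k assume k: "k \<in> {k\<in>{1..length w}. w!(k-1) = c}"
    then have "k = Suc (k-1)" "k - 1 < length w" "c = w!(k-1)" by auto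
    then show "k \<in> Suc ` {i. i < length w \<and> c = w!i}" by (intro image_eqI[of _ _ "k-1"]) auto
  qed
  finally show ?thesis .
qed

lemma length_W: "w \<in> W lam rho \<Longrightarrow> length w = (\<Sum>c\<in>cells lam. rho c)"
  unfolding W_def using sum_count_set[of w "cells lam", OF _ finite_cells] by auto

definition toS :: "(nat \<times> nat) list \<Rightarrow> nat \<times> nat \<Rightarrow> nat set" where
  "toS w = (\<lambda>c. {k\<in>{1..length w}. w!(k-1) = c})"

lemma bef_pos: "prec c d \<Longrightarrow> bef c d w \<Longrightarrow> x \<in> toS w c \<Longrightarrow> y \<in> toS w d \<Longrightarrow> x < y"
proof -
  assume pr: "prec c d" and b: "bef c d w" and x: "x \<in> toS w c" and y: "y \<in> toS w d"
  have cd: "c \<noteq> d" using pr unfolding prec_def by auto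
  have "x - 1 < y - 1" using b[unfolded bef_nth[OF cd]] x y unfolding toS_def by auto
  then show "x < y" by simp
qed

lemma toS_in_SVT: assumes w: "w \<in> W lam rho" shows "toS w \<in> SVT lam rho"
proof -
  have sub: "set w \<subseteq> cells lam" and cnt: "\<forall>c\<in>cells lam. count_list w c = rho c"
    and pr: "\<forall>c d. prec c d \<longrightarrow> bef c d w" using w unfolding W_def by auto
  have len: "length w = (\<Sum>c\<in>cells lam. rho c)" using length_W[OF w] .
  have A: "\<forall>c. c \<notin> cells lam \<longrightarrow> toS w c = {}"
  proof (intro allI impI)
    fix c assume c: "c \<notin> cells lam"
    show "toS w c = {}"
    proof (rule ccontr)
      assume "toS w c \<noteq> {}"
      then obtain k where "k \<in> {1..length w}" "w!(k-1) = c" unfolding toS_def by auto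
      then have "k - 1 < length w" "w!(k-1) = c" by auto
      then have "c \<in> set w" using nth_mem by metis
      then show False using sub c by auto
    qed
  qed
  have B: "\<forall>c\<in>cells lam. finite (toS w c) \<and> card (toS w c) = rho c"
  proof
    fix c assume c: "c \<in> cells lam"
    have "card (toS w c) = count_list w c" unfolding toS_def by (rule count_card[symmetric])
    moreover have "finite (toS w c)" unfolding toS_def by auto
    ultimately show "finite (toS w c) \<and> card (toS w c) = rho c" using cnt c by simp
  qed
  have C: "\<forall>c\<in>cells lam. \<forall>d\<in>cells lam. c \<noteq> d \<longrightarrow> toS w c \<inter> toS w d = {}"
    unfolding toS_def by auto
  have D: "(\<Union>c\<in>cells lam. toS w c) = {1..(\<Sum>c\<in>cells lam. rho c)}"
  proof
    show "(\<Union>c\<in>cells lam. toS w c) \<subseteq> {1..(\<Sum>c\<in>cells lam. rho c)}"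
      using len unfolding toS_def by auto
    show "{1..(\<Sum>c\<in>cells lam. rho c)} \<subseteq> (\<Union>c\<in>cells lam. toS w c)"
    proof
      fix k assume k: "k \<in> {1..(\<Sum>c\<in>cells lam. rho c)}"
      then have "k - 1 < length w" using len by auto
      then have "w!(k-1) \<in> set w" by (rule nth_mem)
      then have "w!(k-1) \<in> cells lam" using sub by auto
      moreover have "k \<in> toS w (w!(k-1))" using k len unfolding toS_def by auto
      ultimately show "k \<in> (\<Union>c\<in>cells lam. toS w c)" by auto
    qed
  qed
  have E: "\<forall>i j. (i, j) \<in> cells lam \<longrightarrow>
        (\<forall>x\<in>toS w (i, j).
           ((i, j + 1) \<in> cells lam \<longrightarrow> (\<forall>y\<in>toS w (i, j + 1). x < y)) \<and>
           ((i + 1, j) \<in> cells lam \<longrightarrow> (\<forall>y\<in>toS w (i + 1, j). x < y)))"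
  proof (intro allI impI ballI conjI)
    fix i j x y
    assume "x \<in> toS w (i,j)" "y \<in> toS w (i, j+1)"
    moreover have "prec (i,j) (i,j+1)" by (simp add: prec_def)
    ultimately show "x < y" using bef_pos[of "(i,j)" "(i,j+1)" w x y] pr by blast
  next
    fix i j x y
    assume "x \<in> toS w (i,j)" "y \<in> toS w (i+1, j)"
    moreover have "prec (i,j) (i+1,j)" by (simp add: prec_def)
    ultimately show "x < y" using bef_pos[of "(i,j)" "(i+1,j)" w x y] pr by blast
  qed
  show ?thesis unfolding SVT_def using A B C D E by blast
qed

lemma toS_inj: "inj_on toS (W lam rho)"
proof
  fix w v assume w: "w \<in> W lam rho" and v: "v \<in> W lam rho" and eq: "toS w = toS v"
  have l: "length w = length v" using length_W[OF w] length_W[OF v] by simp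
  show "w = v"
  proof (rule nth_equalityI[OF l])
    fix p assume p: "p < length w"
    have "Suc p \<in> toS w (w!p)" using p unfolding toS_def by auto
    then have "Suc p \<in> toS v (w!p)" using eq by simp
    then show "w!p = v!p" unfolding toS_def by auto
  qed
qed

lemma toS_surj: assumes S: "S \<in> SVT lam rho" shows "\<exists>w\<in>W lam rho. toS w = S"
proof -
  define N where "N = (\<Sum>c\<in>cells lam. rho c)"
  have out: "\<forall>c. c \<notin> cells lam \<longrightarrow> S c = {}"
    and fc: "\<forall>c\<in>cells lam. finite (S c) \<and> card (S c) = rho c"
    and dj: "\<forall>c\<in>cells lam. \<forall>d\<in>cells lam. c \<noteq> d \<longrightarrow> S c \<inter> S d = {}"
    and un: "(\<Union>c\<in>cells lam. S c) = {1..N}"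
    and ord: "\<forall>i j. (i, j) \<in> cells lam \<longrightarrow>
        (\<forall>x\<in>S (i, j).
           ((i, j + 1) \<in> cells lam \<longrightarrow> (\<forall>y\<in>S (i, j + 1). x < y)) \<and>
           ((i + 1, j) \<in> cells lam \<longrightarrow> (\<forall>y\<in>S (i + 1, j). x < y)))"
    using S unfolding SVT_def N_def by auto
  define f where "f k = (SOME c. c \<in> cells lam \<and> k \<in> S c)" for k
  have f: "f k \<in> cells lam \<and> k \<in> S (f k)" if "k \<in> {1..N}" for k
  proof -
    have "k \<in> (\<Union>c\<in>cells lam. S c)" using that un by simp
    then have "\<exists>c. c \<in> cells lam \<and> k \<in> S c" by blast
    then show ?thesis unfolding f_def by (rule someI_ex)
  qed
  have funi: "f k = c" if "k \<in> S c" for k c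
  proof -
    have c: "c \<in> cells lam" using that out by blast
    have k: "k \<in> {1..N}" using that c un by auto
    show ?thesis using f[OF k] dj c that by blast
  qed
  define w where "w = map f [1..<Suc N]"
  have lw: "length w = N" unfolding w_def by simp
  have wn: "w!(k-1) = f k" if "k \<in> {1..N}" for k
  proof -
    have "k - 1 < length [1..<Suc N]" using that by auto
    then show ?thesis unfolding w_def using that by (simp del: upt_Suc)
  qed
  have tS: "toS w = S"
  proof
    fix c
    show "toS w c = S c"
    proof
      show "toS w c \<subseteq> S c"
      proof
        fix k assume "k \<in> toS w c"
        then have k: "k \<in> {1..N}" and "w!(k-1) = c" unfolding toS_def using lw by auto
        then show "k \<in> S c" using f[OF k] wn[OF k] by simp
      qed
      show "S c \<subseteq> toS w c"
      proof
        fix k assume kc: "k \<in> S c"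
        then have c: "c \<in> cells lam" using out by blast
        have k: "k \<in> {1..N}" using kc c un by auto
        show "k \<in> toS w c" unfolding toS_def using k lw wn[OF k] funi[OF kc] by auto
      qed
    qed
  qed
  have sub: "set w \<subseteq> cells lam" unfolding w_def using f by auto
  have cnt: "\<forall>c\<in>cells lam. count_list w c = rho c"
  proof
    fix c assume c: "c \<in> cells lam"
    have "count_list w c = card (toS w c)" unfolding toS_def by (rule count_card)
    then show "count_list w c = rho c" using tS fc c by simp
  qed
  have pr: "\<forall>c d. prec c d \<longrightarrow> bef c d w"
  proof (intro allI impI)
    fix c d assume pcd: "prec c d"
    have cd: "c \<noteq> d" using pcd unfolding prec_def by auto
    show "bef c d w" unfolding bef_nth[OF cd]
    proof (intro allI impI)
      fix p q assume p: "p < length w" and q: "q < length w" and pc: "w!p = c" and qd: "w!q = d"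
      have "Suc p \<in> toS w c" "Suc q \<in> toS w d" using p q pc qd unfolding toS_def by auto
      then have sp: "Suc p \<in> S c" and sq: "Suc q \<in> S d" using tS by auto
      have cc: "c \<in> cells lam" "d \<in> cells lam" using p q pc qd sub by (auto dest: nth_mem)
      obtain i j where cij: "c = (i,j)" by (cases c)
      obtain i' j' where dij: "d = (i',j')" by (cases d)
      have "(i' = i \<and> j' = j + 1) \<or> (i' = i + 1 \<and> j' = j)" using pcd unfolding cij dij prec_def by auto
      then have "Suc p < Suc q"
      proof
        assume "i' = i \<and> j' = j + 1"
        then show ?thesis using ord cc sp sq unfolding cij dij by blast
      next
        assume "i' = i + 1 \<and> j' = j"
        then show ?thesis using ord cc sp sq unfolding cij dij by blast
      qed
      then show "p < q" by simp
    qed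
  qed
  have "w \<in> W lam rho" unfolding W_def using sub cnt pr by auto
  then show ?thesis using tS by auto
qed

lemma card_SVT_W: "card (SVT lam rho) = card (W lam rho)"
proof -
  have "bij_betw toS (W lam rho) (SVT lam rho)"
    unfolding bij_betw_def using toS_inj toS_in_SVT toS_surj by blast
  then show ?thesis by (simp add: bij_betw_same_card)
qed



lemma block_front: "(\<forall>d\<in>set w. d \<noteq> c \<longrightarrow> bef c d w) \<Longrightarrow> w = replicate (count_list w c) c @ filter (\<lambda>x. x \<noteq> c) w"
proof (induction w)
  case Nil then show ?case by simp
next
  case (Cons x xs)
  have h: "\<forall>d\<in>set xs. d \<noteq> c \<longrightarrow> bef c d xs" using Cons.prems by simp
  show ?case
  proof (cases "x = c")
    case True
    have e: "replicate (count_list xs c) c @ filter (\<lambda>x. x \<noteq> c) xs = xs" using Cons.IH[OF h] by simp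
    show ?thesis using True by (simp add: e)
  next
    case False
    then have "c \<notin> set xs" using Cons.prems by simp
    moreover have "filter (\<lambda>x. x \<noteq> c) xs = xs" using \<open>c \<notin> set xs\<close> by (auto simp: filter_id_conv)
    ultimately show ?thesis using False by simp
  qed
qed

lemma last_split_unique:
  assumes "u @ v = u2 @ v2" "u \<noteq> []" "u2 \<noteq> []" "last u = x" "last u2 = x" "x \<notin> set v" "x \<notin> set v2"
  shows "u = u2"
proof -
  obtain us where "(u = u2 @ us \<and> us @ v = v2) \<or> (u @ us = u2 \<and> v = us @ v2)"
    using assms(1) by (auto simp: append_eq_append_conv2)
  then show ?thesis
  proof
    assume h: "u = u2 @ us \<and> us @ v = v2"
    show ?thesis
    proof (cases "us = []")
      case True then show ?thesis using h by simp
    next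
      case False
      then have "last u \<in> set us" using h by simp
      then show ?thesis using h assms by auto
    qed
  next
    assume h: "u @ us = u2 \<and> v = us @ v2"
    show ?thesis
    proof (cases "us = []")
      case True then show ?thesis using h by simp
    next
      case False
      then have "last u2 \<in> set us" using h by auto
      then show ?thesis using h assms by auto
    qed
  qed
qed

lemma card_lists_count:
  assumes "x \<noteq> y"
  shows "card {v. length v = n \<and> set v \<subseteq> {x,y} \<and> count_list v y = k} = n choose k"
proof (induction n arbitrary: k)
  case 0
  have "{v. length v = 0 \<and> set v \<subseteq> {x,y} \<and> count_list v y = k} = (if k = 0 then {[]} else {})" by auto
  then show ?case by simp
next
  case (Suc n)
  define L where "L n k = {v. length v = n \<and> set v \<subseteq> {x,y} \<and> count_list v y = k}" for n k
  have fin: "finite (L n k)" for n k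
  proof -
    have "L n k \<subseteq> {v. set v \<subseteq> {x,y} \<and> length v = n}" unfolding L_def by auto
    then show ?thesis using finite_lists_length_eq[of "{x,y}" n] by (rule finite_subset) simp
  qed
  show ?case
  proof (cases k)
    case 0
    have "L (Suc n) 0 = Cons x ` L n 0"
    proof
      show "L (Suc n) 0 \<subseteq> Cons x ` L n 0"
      proof
        fix v assume "v \<in> L (Suc n) 0"
        then obtain h t where v: "v = h # t" "length t = n" "set (h#t) \<subseteq> {x,y}" "count_list (h#t) y = 0"
          unfolding L_def by (cases v) auto
        then have "h = x" by (auto split: if_splits)
        then show "v \<in> Cons x ` L n 0" using v assms unfolding L_def by (auto split: if_splits)
      qed
      show "Cons x ` L n 0 \<subseteq> L (Suc n) 0" unfolding L_def using assms by auto
    qed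
    then have "card (L (Suc n) 0) = card (L n 0)" by (simp add: card_image)
    then show ?thesis using Suc.IH[of 0] 0 unfolding L_def by simp
  next
    case (Suc k')
    have "L (Suc n) (Suc k') = Cons x ` L n (Suc k') \<union> Cons y ` L n k'"
    proof
      show "L (Suc n) (Suc k') \<subseteq> Cons x ` L n (Suc k') \<union> Cons y ` L n k'"
      proof
        fix v assume "v \<in> L (Suc n) (Suc k')"
        then obtain h t where v: "v = h # t" "length t = n" "set (h#t) \<subseteq> {x,y}" "count_list (h#t) y = Suc k'"
          unfolding L_def by (cases v) auto
        then show "v \<in> Cons x ` L n (Suc k') \<union> Cons y ` L n k'" using assms unfolding L_def
          by (auto split: if_splits)
      qed
      show "Cons x ` L n (Suc k') \<union> Cons y ` L n k' \<subseteq> L (Suc n) (Suc k')" unfolding L_def using assms by auto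
    qed
    moreover have "Cons x ` L n (Suc k') \<inter> Cons y ` L n k' = {}" using assms by auto
    ultimately have "card (L (Suc n) (Suc k')) = card (L n (Suc k')) + card (L n k')"
      using fin by (simp add: card_Un_disjoint card_image)
    then show ?thesis using Suc.IH[of k'] Suc.IH[of "Suc k'"] Suc unfolding L_def by simp
  qed
qed

lemma cells2: "(r,j) \<in> cells [m1,m2] \<longleftrightarrow> 1 \<le> j \<and> ((r = 1 \<and> j \<le> m1) \<or> (r = 2 \<and> j \<le> m2))"
proof
  assume "(r,j) \<in> cells [m1,m2]"
  then have "1 \<le> r" "r \<le> 2" "1 \<le> j" "j \<le> [m1,m2] ! (r - 1)" unfolding cells_def by auto
  then show "1 \<le> j \<and> ((r = 1 \<and> j \<le> m1) \<or> (r = 2 \<and> j \<le> m2))"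
    by (cases "r = 1") (auto simp: numeral_2_eq_2 le_Suc_eq)
next
  assume "1 \<le> j \<and> ((r = 1 \<and> j \<le> m1) \<or> (r = 2 \<and> j \<le> m2))"
  then show "(r,j) \<in> cells [m1,m2]" unfolding cells_def by auto
qed

locale twow =
  fixes m1 m2 :: nat and rho w
  assumes le: "m2 \<le> m1" and w: "w \<in> W [m1,m2] rho" and pos: "\<forall>c\<in>cells [m1,m2]. rho c > 0" and m2: "1 \<le> m2"
begin

lemma inset: assumes c: "c \<in> cells [m1,m2]" shows "c \<in> set w"
proof -
  have "count_list w c = rho c" using w c unfolding W_def by blast
  moreover have "rho c > 0" using pos c by blast
  ultimately have "count_list w c \<noteq> 0" by simp
  then show ?thesis by (simp add: count_list_0_iff)
qed

lemma prec_bef: "prec c d \<Longrightarrow> bef c d w" using w unfolding W_def by blast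

lemma row_chain: "(r,j) \<in> cells [m1,m2] \<Longrightarrow> 1 \<le> k \<Longrightarrow> k < j \<Longrightarrow> bef (r,k) (r,j) w"
proof (induction j)
  case 0 then show ?case by simp
next
  case (Suc j)
  have p: "prec (r,j) (r, Suc j)" by (simp add: prec_def)
  show ?case
  proof (cases "k = j")
    case True then show ?thesis using prec_bef[OF p] by simp
  next
    case False
    then have kj: "k < j" using Suc.prems(3) by simp
    have "1 \<le> Suc j \<and> ((r = 1 \<and> Suc j \<le> m1) \<or> (r = 2 \<and> Suc j \<le> m2))" using Suc.prems(1) by (simp only: cells2)
    then have "1 \<le> j \<and> ((r = 1 \<and> j \<le> m1) \<or> (r = 2 \<and> j \<le> m2))" using kj Suc.prems(2) by linarith
    then have cj: "(r,j) \<in> cells [m1,m2]" by (simp only: cells2)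
    have b1: "bef (r,k) (r,j) w" using Suc.IH[OF cj Suc.prems(2) kj] .
    have b2: "bef (r,j) (r, Suc j) w" using prec_bef[OF p] .
    show ?thesis by (rule bef_trans[OF b1 b2 inset[OF cj]])
  qed
qed

lemma ord_bef:
  assumes c: "(r,j) \<in> cells [m1,m2]" and d: "(r',j') \<in> cells [m1,m2]" and ne: "(r,j) \<noteq> (r',j')"
    and rr: "r \<le> r'" and jj: "j \<le> j'"
  shows "bef (r,j) (r',j') w"
proof (cases "r = r'")
  case True
  then have "j < j'" using ne jj by auto
  moreover have "1 \<le> j" using c by (simp add: cells2)
  ultimately show ?thesis using row_chain[OF d] True by simp
next
  case False
  then have r: "r = 1" "r' = 2" using c d rr by (auto simp: cells2)
  show ?thesis
  proof (cases "j = j'")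
    case True
    have "prec (r,j) (r',j')" using r True by (simp add: prec_def)
    then show ?thesis by (rule prec_bef)
  next
    case False
    have j1: "1 \<le> j" using c by (simp add: cells2)
    have jm: "j' \<le> m2" using d r by (simp add: cells2)
    have c2: "(2,j) \<in> cells [m1,m2]" using j1 jm jj by (simp add: cells2)
    have "prec (1,j) (2,j)" by (simp add: prec_def)
    then have b1: "bef (1,j) (2,j) w" by (rule prec_bef)
    have b2: "bef (2,j) (2,j') w" using row_chain[of 2 j' j] d r j1 False jj by simp
    show ?thesis unfolding r by (rule bef_trans[OF b1 b2 inset[OF c2]])
  qed
qed

lemma first_block:
  "w = replicate (rho (1,1)) (1,1) @ drop (rho (1,1)) w \<and> (1,1) \<notin> set (drop (rho (1,1)) w)"
proof -
  have c11: "(1,1) \<in> cells [m1,m2]" using le m2 unfolding cells2 by auto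
  have sub: "set w \<subseteq> cells [m1,m2]" using w unfolding W_def by auto
  have "\<forall>d\<in>set w. d \<noteq> (1,1) \<longrightarrow> bef (1,1) d w"
  proof (intro ballI impI)
    fix d assume d: "d \<in> set w" "d \<noteq> (1,1)"
    obtain r j where dd: "d = (r,j)" by (cases d)
    have "(r,j) \<in> cells [m1,m2]" using d sub dd by auto
    moreover have "1 \<le> r" "1 \<le> j" using \<open>(r,j) \<in> cells [m1,m2]\<close> by (auto simp: cells2)
    moreover have "(1,1) \<noteq> (r,j)" using d(2) dd by metis
    ultimately show "bef (1,1) d w" unfolding dd by (intro ord_bef[OF c11]) auto
  qed
  then have e: "w = replicate (count_list w (1,1)) (1,1) @ filter (\<lambda>x. x \<noteq> (1,1)) w" by (rule block_front)
  have cnt: "count_list w (1,1) = rho (1,1)" using w c11 unfolding W_def by auto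
  have "drop (rho (1,1)) w = filter (\<lambda>x. x \<noteq> (1,1)) w"
    using arg_cong[OF e, of "drop (rho (1,1))"] cnt by simp
  then show ?thesis using e cnt by auto
qed

end

abbreviation "YY \<equiv> (2::nat, 1::nat)"

definition sh :: "nat \<times> nat \<Rightarrow> nat \<times> nat" where "sh c = (fst c, max 1 (snd c - 1))"

fun ush :: "nat \<Rightarrow> (nat \<times> nat) list \<Rightarrow> (nat \<times> nat) list" where
  "ush k [] = []"
| "ush k (c # cs) = (if c = YY then (if k > 0 then YY # ush (k - 1) cs else (2,2) # ush 0 cs)
                     else (fst c, Suc (snd c)) # ush k cs)"

lemma sh_ge2: "2 \<le> snd c \<Longrightarrow> sh c = (fst c, snd c - 1)"
  by (simp add: sh_def max_def)

lemma sh_Y: "sh YY = YY" by (simp add: sh_def)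

lemma sh_succ: "sh (r, Suc j) = (r, max 1 j)" by (simp add: sh_def)

lemma ush_Cons_Y: "ush k (YY # cs) = (if k > 0 then YY # ush (k - 1) cs else (2,2) # ush 0 cs)"
  by simp

lemma ush_Cons_nY: "c \<noteq> YY \<Longrightarrow> ush k (c # cs) = (fst c, Suc (snd c)) # ush k cs"
  by simp

lemma ush_Cons_Y1: "ush k ((2, Suc 0) # cs) = (if k > 0 then (2, Suc 0) # ush (k - 1) cs else (2,2) # ush 0 cs)"
  by simp

lemma sh_Y1: "sh (2, Suc 0) = (2, Suc 0)" by (simp add: sh_def)

declare ush.simps(2)[simp del]

lemma sh_ush: "\<forall>c\<in>set v. 1 \<le> snd c \<Longrightarrow> map sh (ush k v) = v"
proof (induction v arbitrary: k)
  case Nil then show ?case by simp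
next
  case (Cons c cs)
  have h: "\<forall>c\<in>set cs. 1 \<le> snd c" using Cons.prems by simp
  show ?case
  proof (cases "c = YY")
    case True
    show ?thesis
    proof (cases "k > 0")
      case True then show ?thesis using \<open>c = YY\<close> Cons.IH[OF h] by (simp add: ush_Cons_Y ush_Cons_Y1 sh_Y1)
    next
      case False
      have "sh (2,2) = YY" by (simp add: sh_def)
      then show ?thesis using \<open>c = YY\<close> False Cons.IH[OF h] by (simp add: ush_Cons_Y ush_Cons_Y1 sh_Y1)
    qed
  next
    case False
    have "1 \<le> snd c" using Cons.prems by simp
    then have "sh (fst c, Suc (snd c)) = c" by (simp add: sh_succ max_def)
    then show ?thesis using False Cons.IH[OF h] by (simp add: ush_Cons_nY)
  qed
qed

lemma ush_sh: "\<forall>c\<in>set v. c = YY \<or> 2 \<le> snd c \<Longrightarrow> bef YY (2,2) v \<Longrightarrow> ush (count_list v YY) (map sh v) = v"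
proof (induction v)
  case Nil then show ?case by simp
next
  case (Cons x xs)
  have h1: "\<forall>c\<in>set xs. c = YY \<or> 2 \<le> snd c" using Cons.prems by simp
  have h2: "bef YY (2,2) xs" using Cons.prems by simp
  note IH = Cons.IH[OF h1 h2]
  show ?case
  proof (cases "x = YY")
    case True then show ?thesis using IH by (simp add: sh_Y ush_Cons_Y ush_Cons_Y1 sh_Y1)
  next
    case False
    show ?thesis
    proof (cases "x = (2,2)")
      case True
      then have "YY \<notin> set xs" using Cons.prems by simp
      then have "count_list xs YY = 0" by simp
      moreover have "sh x = YY" using True by (simp add: sh_def)
      ultimately show ?thesis using IH True by (simp add: ush_Cons_Y ush_Cons_Y1 sh_Y1)
    next
      case F2: False
      have j: "2 \<le> snd x" using Cons.prems False by auto
      then have shx: "sh x = (fst x, snd x - 1)" by (rule sh_ge2)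
      have "sh x \<noteq> YY"
      proof
        assume "sh x = YY"
        then have "fst x = 2" "snd x = 2" using shx j by auto
        then show False using F2 by (metis prod.collapse)
      qed
      moreover have "(fst (sh x), Suc (snd (sh x))) = x" using shx j by simp
      ultimately show ?thesis using IH False by (simp add: ush_Cons_nY)
    qed
  qed
qed

lemma count_ush_Y: "\<forall>c\<in>set v. 1 \<le> snd c \<Longrightarrow> k \<le> count_list v YY \<Longrightarrow> count_list (ush k v) YY = k"
proof (induction v arbitrary: k)
  case Nil then show ?case by simp
next
  case (Cons c cs)
  have h: "\<forall>c\<in>set cs. 1 \<le> snd c" using Cons.prems by simp
  show ?case
  proof (cases "c = YY")
    case True
    show ?thesis
    proof (cases "k > 0")
      case True
      have "k - 1 \<le> count_list cs YY" using Cons.prems \<open>c = YY\<close> by simp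
      then show ?thesis using \<open>c = YY\<close> True Cons.IH[OF h] by (simp add: ush_Cons_Y ush_Cons_Y1 sh_Y1)
    next
      case False then show ?thesis using \<open>c = YY\<close> Cons.IH[OF h, of 0] by (simp add: ush_Cons_Y ush_Cons_Y1 sh_Y1)
    qed
  next
    case False
    have "1 \<le> snd c" using Cons.prems by simp
    then have "(fst c, Suc (snd c)) \<noteq> YY" by auto
    then show ?thesis using False Cons.IH[OF h] Cons.prems by (simp add: ush_Cons_nY)
  qed
qed

lemma ush_noY0: "\<forall>c\<in>set v. 1 \<le> snd c \<Longrightarrow> YY \<notin> set (ush 0 v)"
proof (induction v)
  case Nil then show ?case by simp
next
  case (Cons c cs)
  have h: "\<forall>c\<in>set cs. 1 \<le> snd c" using Cons.prems by simp
  show ?case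
  proof (cases "c = YY")
    case True then show ?thesis using Cons.IH[OF h] by (simp add: ush_Cons_Y ush_Cons_Y1 sh_Y1)
  next
    case False
    have "1 \<le> snd c" using Cons.prems by simp
    then have "(fst c, Suc (snd c)) \<noteq> YY" by auto
    then show ?thesis using False Cons.IH[OF h] by (simp add: ush_Cons_nY)
  qed
qed

lemma ush_bef: "\<forall>c\<in>set v. 1 \<le> snd c \<Longrightarrow> bef YY (2,2) (ush k v)"
proof (induction v arbitrary: k)
  case Nil then show ?case by simp
next
  case (Cons c cs)
  have h: "\<forall>c\<in>set cs. 1 \<le> snd c" using Cons.prems by simp
  show ?case
  proof (cases "c = YY")
    case True
    show ?thesis
    proof (cases "k > 0")
      case True then show ?thesis using \<open>c = YY\<close> Cons.IH[OF h] by (simp add: ush_Cons_Y ush_Cons_Y1 sh_Y1)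
    next
      case False then show ?thesis using \<open>c = YY\<close> Cons.IH[OF h] ush_noY0[OF h] by (simp add: ush_Cons_Y ush_Cons_Y1 sh_Y1)
    qed
  next
    case False
    have "1 \<le> snd c" using Cons.prems by simp
    have "(fst c, Suc (snd c)) \<noteq> (2,2)"
    proof
      assume "(fst c, Suc (snd c)) = (2,2)"
      then have "c = YY" by (cases c) simp
      then show False using False by simp
    qed
    then show ?thesis using False Cons.IH[OF h] by (auto simp add: ush_Cons_nY)
  qed
qed

lemma count_map_sh:
  "\<forall>c\<in>set v. c = YY \<or> 2 \<le> snd c \<Longrightarrow> 1 \<le> snd c' \<Longrightarrow>
   count_list (map sh v) c' = (if c' = YY then count_list v YY + count_list v (2,2) else count_list v (fst c', Suc (snd c')))"
proof (induction v)
  case Nil then show ?case by simp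
next
  case (Cons x xs)
  have h: "\<forall>c\<in>set xs. c = YY \<or> 2 \<le> snd c" using Cons.prems by simp
  note IH = Cons.IH[OF h Cons.prems(2)]
  obtain r j where x: "x = (r,j)" by (cases x)
  obtain r' j' where c': "c' = (r',j')" by (cases c')
  have j': "1 \<le> j'" using Cons.prems c' by simp
  have key: "(sh x = c') = (if c' = YY then x = YY \<or> x = (2,2) else x = (fst c', Suc (snd c')))"
  proof (cases "x = YY")
    case True then show ?thesis using x c' j' by (auto simp: sh_def)
  next
    case False
    then have j: "2 \<le> j" using Cons.prems x by auto
    then have "sh x = (r, j - 1)" using x by (simp add: sh_def max_def)
    then show ?thesis using x c' j j' False by auto
  qed
  show ?case using IH key by (auto simp: count_list.simps)
qed

lemma set_ush: "c \<in> set (ush k v) \<Longrightarrow> c = YY \<or> c = (2,2) \<or> (\<exists>c'\<in>set v. c' \<noteq> YY \<and> c = (fst c', Suc (snd c')))"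
proof (induction v arbitrary: k)
  case Nil then show ?case by simp
next
  case (Cons x xs)
  show ?case
  proof (cases "x = YY")
    case True then show ?thesis using Cons by (auto simp: ush_Cons_Y ush_Cons_Y1 split: if_splits)
  next
    case False then show ?thesis using Cons by (auto simp: ush_Cons_nY)
  qed
qed

lemma bef_map: "bef (f c) (f d) (map f v) \<Longrightarrow> bef c d v"
  by (induction v) auto

lemma bef_map2: "\<forall>c\<in>set v. \<forall>d\<in>set v. f c = c' \<longrightarrow> f d = d' \<longrightarrow> bef c d v \<Longrightarrow> bef c' d' (map f v)"
proof (induction v)
  case Nil then show ?case by simp
next
  case (Cons x xs)
  have "\<forall>c\<in>set xs. \<forall>d\<in>set xs. f c = c' \<longrightarrow> f d = d' \<longrightarrow> bef c d xs" using Cons.prems by auto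
  then have "bef c' d' (map f xs)" using Cons.IH by blast
  moreover have "f x = d' \<longrightarrow> c' \<notin> set (map f xs)"
  proof
    assume "f x = d'"
    show "c' \<notin> set (map f xs)"
    proof
      assume "c' \<in> set (map f xs)"
      then obtain y where "y \<in> set xs" "f y = c'" by auto
      then have "bef y x (x # xs)" using Cons.prems \<open>f x = d'\<close> by auto
      then show False using \<open>y \<in> set xs\<close> by simp
    qed
  qed
  ultimately show ?case by simp
qed



definition rho0 :: "(nat \<Rightarrow> nat) \<Rightarrow> (nat \<Rightarrow> nat) \<Rightarrow> nat \<times> nat \<Rightarrow> nat" where
  "rho0 a b = (\<lambda>(r, j). if r = 1 then a j else if r = 2 then b j else 0)"

definition rhop :: "(nat \<Rightarrow> nat) \<Rightarrow> (nat \<Rightarrow> nat) \<Rightarrow> nat \<Rightarrow> nat \<times> nat \<Rightarrow> nat" where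
  "rhop a b i = (\<lambda>(r, j). if r = 1 then a (j + 1)
                   else if r = 2 then (if j = 1 then b 1 + b 2 - i else b (j + 1))
                   else 0)"

definition II :: "(nat \<Rightarrow> nat) \<Rightarrow> nat \<Rightarrow> (nat \<times> nat) list set" where
  "II a i = {u. length u = a 2 + i \<and> set u \<subseteq> {(1,2), YY} \<and> count_list u YY = i \<and> last u = (1,2)}"

lemma count_two: "set u \<subseteq> {x,y} \<Longrightarrow> x \<noteq> y \<Longrightarrow> count_list u x + count_list u y = length u"
  by (induction u) auto

lemma card_II: assumes "0 < a 2" shows "card (II a i) = (a 2 + i - 1 choose i)"
proof -
  define L where "L = {v. length v = a 2 + i - 1 \<and> set v \<subseteq> {(1::nat,2::nat), YY} \<and> count_list v YY = i}"
  have "II a i = (\<lambda>v. v @ [(1,2)]) ` L"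
  proof
    show "II a i \<subseteq> (\<lambda>v. v @ [(1,2)]) ` L"
    proof
      fix u assume u: "u \<in> II a i"
      then have "u \<noteq> []" using assms unfolding II_def by auto
      have lu: "last u = (1,2)" using u unfolding II_def by simp
      have e: "u = butlast u @ [(1,2)]" using append_butlast_last_id[OF \<open>u \<noteq> []\<close>] lu by simp
      have l1: "length (butlast u) = a 2 + i - 1" using u unfolding II_def by simp
      have s1: "set (butlast u) \<subseteq> {(1,2), YY}" using u in_set_butlastD unfolding II_def by fastforce
      have "count_list u YY = count_list (butlast u) YY"
        using arg_cong[OF e, of "\<lambda>x. count_list x YY"] by simp
      then have c1: "count_list (butlast u) YY = i" using u unfolding II_def by simp
      have "butlast u \<in> L" unfolding L_def using l1 s1 c1 by simp
      then show "u \<in> (\<lambda>v. v @ [(1,2)]) ` L" using e by blast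
    qed
    show "(\<lambda>v. v @ [(1,2)]) ` L \<subseteq> II a i" unfolding L_def II_def using assms by auto
  qed
  then have "card (II a i) = card L" by (simp add: card_image inj_on_def)
  also have "\<dots> = (a 2 + i - 1 choose i)" unfolding L_def by (rule card_lists_count) simp
  finally show ?thesis .
qed

lemma count_rep: "count_list (replicate n x) y = (if x = y then n else 0)"
  by (induction n) auto

lemma bef_suffix: "bef c d (xs @ ys) \<Longrightarrow> bef c d ys" by (simp add: bef_append)
lemma bef_prefix: "bef c d (xs @ ys) \<Longrightarrow> bef c d xs" by (simp add: bef_append)

lemma bef_rep: "c \<noteq> d \<Longrightarrow> bef c d (replicate n e)"
  by (induction n) auto

context
  fixes n1 n2 :: nat and a b :: "nat \<Rightarrow> nat"
  assumes le: "n2 \<le> n1" and n2: "2 \<le> n2"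
    and pa: "\<forall>j. 1 \<le> j \<and> j \<le> n1 \<longrightarrow> a j > 0"
    and pb: "\<forall>j. 1 \<le> j \<and> j \<le> n2 \<longrightarrow> b j > 0"
begin

lemma twoA: assumes w: "w \<in> W [n1,n2] (rho0 a b)" shows "twow n1 n2 (rho0 a b) w"
proof -
  have "\<forall>c\<in>cells [n1,n2]. rho0 a b c > 0"
  proof
    fix c assume c: "c \<in> cells [n1,n2]"
    obtain r j where cc: "c = (r,j)" by (cases c)
    show "rho0 a b c > 0"
    proof (cases "r = 1")
      case True
      then have "1 \<le> j" "j \<le> n1" using c cc by (auto simp: cells2)
      then show ?thesis using pa True cc by (simp add: rho0_def)
    next
      case False
      then have r2: "r = 2" and j: "1 \<le> j" "j \<le> n2" using c cc by (auto simp: cells2)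
      then show ?thesis using pb cc by (simp add: rho0_def)
    qed
  qed
  moreover have "1 \<le> n2" using n2 by simp
  ultimately show ?thesis unfolding twow_def using le w by simp
qed

lemma twoA': assumes i: "i \<le> b 1" and w: "w \<in> W [n1-1,n2-1] (rhop a b i)"
  shows "twow (n1-1) (n2-1) (rhop a b i) w"
proof -
  have b2: "b 2 > 0" using pb n2 by auto
  have "\<forall>c\<in>cells [n1-1,n2-1]. rhop a b i c > 0"
  proof
    fix c assume c: "c \<in> cells [n1-1,n2-1]"
    obtain r j where cc: "c = (r,j)" by (cases c)
    show "rhop a b i c > 0"
    proof (cases "r = 1")
      case True
      then have "1 \<le> j + 1" "j + 1 \<le> n1" using c cc by (auto simp: cells2)
      then show ?thesis using pa True cc by (simp add: rhop_def)
    next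
      case False
      then have r2: "r = 2" and j: "1 \<le> j" "j \<le> n2 - 1" using c cc by (auto simp: cells2)
      show ?thesis
      proof (cases "j = 1")
        case True then show ?thesis using r2 cc b2 i by (simp add: rhop_def)
      next
        case False
        then have "1 \<le> j + 1" "j + 1 \<le> n2" using j n2 by auto
        then show ?thesis using pb r2 cc False by (simp add: rhop_def)
      qed
    qed
  qed
  moreover have "n2 - 1 \<le> n1 - 1" "1 \<le> n2 - 1" using le n2 by auto
  ultimately show ?thesis unfolding twow_def using w by simp
qed

lemma vprops:
  assumes i: "i \<le> b 1" and w': "w' \<in> W [n1-1,n2-1] (rhop a b i)"
  shows "w' = replicate (a 2) (1,1) @ drop (a 2) w'"
    and "set (drop (a 2) w') \<subseteq> cells [n1-1,n2-1] - {(1,1)}"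
    and "count_list (drop (a 2) w') YY = b 1 + b 2 - i"
    and "map sh (ush (b 1 - i) (drop (a 2) w')) = drop (a 2) w'"
    and "count_list (ush (b 1 - i) (drop (a 2) w')) YY = b 1 - i"
    and "bef YY (2,2) (ush (b 1 - i) (drop (a 2) w'))"
    and "set (ush (b 1 - i) (drop (a 2) w')) \<subseteq> cells [n1,n2] - {(1,1),(1,2)}"
proof -
  interpret T: twow "n1-1" "n2-1" "rhop a b i" w' using twoA'[OF i w'] .
  have r11: "rhop a b i (1,1) = a 2" by (simp add: rhop_def numeral_2_eq_2)
  have fb: "w' = replicate (a 2) (1,1) @ drop (a 2) w'" "(1,1) \<notin> set (drop (a 2) w')"
    using T.first_block unfolding r11 by auto
  show "w' = replicate (a 2) (1,1) @ drop (a 2) w'" by (rule fb(1))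
  have sw: "set w' \<subseteq> cells [n1-1,n2-1]" using w' unfolding W_def by auto
  then have sv': "set (drop (a 2) w') \<subseteq> cells [n1-1,n2-1] - {(1,1)}" using fb(2) set_drop_subset by fastforce
  show "set (drop (a 2) w') \<subseteq> cells [n1-1,n2-1] - {(1,1)}" by (rule sv')
  have Yc: "YY \<in> cells [n1-1,n2-1]" using le n2 by (auto simp: cells2)
  have "count_list w' YY = rhop a b i YY" using w' Yc unfolding W_def by auto
  then have "count_list w' YY = b 1 + b 2 - i" by (simp add: rhop_def)
  moreover have "count_list w' YY = count_list (drop (a 2) w') YY"
    using arg_cong[OF fb(1), of "\<lambda>x. count_list x YY"] by (simp add: count_list_append)
  ultimately have cY: "count_list (drop (a 2) w') YY = b 1 + b 2 - i" by simp
  show "count_list (drop (a 2) w') YY = b 1 + b 2 - i" by (rule cY)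
  have snd1: "\<forall>c\<in>set (drop (a 2) w'). 1 \<le> snd c"
  proof
    fix c assume "c \<in> set (drop (a 2) w')"
    then have "c \<in> cells [n1-1,n2-1]" using sv' by auto
    then show "1 \<le> snd c" by (cases c) (auto simp: cells2)
  qed
  show "map sh (ush (b 1 - i) (drop (a 2) w')) = drop (a 2) w'" using sh_ush[OF snd1] .
  show "count_list (ush (b 1 - i) (drop (a 2) w')) YY = b 1 - i"
    using count_ush_Y[OF snd1] cY by simp
  show "bef YY (2,2) (ush (b 1 - i) (drop (a 2) w'))" using ush_bef[OF snd1] .
  show "set (ush (b 1 - i) (drop (a 2) w')) \<subseteq> cells [n1,n2] - {(1,1),(1,2)}"
  proof
    fix c assume "c \<in> set (ush (b 1 - i) (drop (a 2) w'))"
    then consider "c = YY" | "c = (2,2)" | c' where "c' \<in> set (drop (a 2) w')" "c' \<noteq> YY" "c = (fst c', Suc (snd c'))"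
      using set_ush by blast
    then show "c \<in> cells [n1,n2] - {(1,1),(1,2)}"
    proof cases
      case 1 then show ?thesis using le n2 by (auto simp: cells2)
    next
      case 2 then show ?thesis using le n2 by (auto simp: cells2)
    next
      case 3
      obtain r j where c': "c' = (r,j)" by (cases c')
      have "(r,j) \<in> cells [n1-1,n2-1] - {(1,1)}" using 3 sv' c' by auto
      then show ?thesis using 3 c' le n2 by (auto simp: cells2)
    qed
  qed
qed

lemma vY2: "set v \<subseteq> cells [n1,n2] - {(1,1),(1,2)} \<Longrightarrow> \<forall>c\<in>set v. c = YY \<or> 2 \<le> snd c"
proof
  fix c assume "set v \<subseteq> cells [n1,n2] - {(1,1),(1,2)}" "c \<in> set v"
  then have "c \<in> cells [n1,n2] - {(1,1),(1,2)}" by auto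
  then show "c = YY \<or> 2 \<le> snd c" by (cases c) (auto simp: cells2)
qed

lemma prec_sh:
  assumes "c \<in> cells [n1,n2] - {(1,1),(1,2)}" "d \<in> cells [n1,n2] - {(1,1),(1,2)}" "prec c d" "(c,d) \<noteq> (YY,(2,2))"
  shows "prec (sh c) (sh d)"
proof -
  obtain r j where c: "c = (r,j)" by (cases c)
  obtain r' j' where d: "d = (r',j')" by (cases d)
  show ?thesis using assms unfolding c d by (auto simp: cells2 prec_def sh_def)
qed

lemma Psi_in:
  assumes i: "i \<le> b 1" and u: "u \<in> II a i" and w': "w' \<in> W [n1-1,n2-1] (rhop a b i)"
  shows "replicate (a 1) (1,1) @ u @ ush (b 1 - i) (drop (a 2) w') \<in> W [n1,n2] (rho0 a b)"
proof -
  define v' where "v' = drop (a 2) w'"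
  define v where "v = ush (b 1 - i) v'"
  note vp = vprops[OF i w', folded v'_def, folded v_def]
  have su: "set u \<subseteq> {(1,2), YY}" and cuY: "count_list u YY = i" and lu: "length u = a 2 + i"
    using u unfolding II_def by auto
  have cuX: "count_list u (1,2) = a 2" using count_two[OF su] cuY lu by simp
  have sv: "set v \<subseteq> cells [n1,n2] - {(1,1),(1,2)}" using vp(7) .
  have v2: "\<forall>c\<in>set v. c = YY \<or> 2 \<le> snd c" using vY2[OF sv] .
  have cells_ok: "(1,1) \<in> cells [n1,n2]" "(1,2) \<in> cells [n1,n2]" "YY \<in> cells [n1,n2]"
    using le n2 by (auto simp: cells2)
  define w where "w = replicate (a 1) (1,1) @ u @ v"
  have A: "set w \<subseteq> cells [n1,n2]" unfolding w_def using su sv cells_ok by auto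
  have cw: "count_list w c = count_list (replicate (a 1) (1,1)) c + count_list u c + count_list v c" for c
    unfolding w_def by simp
  have cv': "count_list v' c = count_list w' c" if "c \<noteq> (1,1)" for c
    using arg_cong[OF vp(1), of "\<lambda>x. count_list x c"] that by (simp add: count_list_append)
  have B: "\<forall>c\<in>cells [n1,n2]. count_list w c = rho0 a b c"
  proof
    fix c assume cc: "c \<in> cells [n1,n2]"
    obtain r j where c: "c = (r,j)" by (cases c)
    consider "c = (1,1)" | "c = (1,2)" | "c = YY" | "c = (2,2)" | "c \<notin> {(1,1),(1,2),YY,(2,2)}" by blast
    then show "count_list w c = rho0 a b c"
    proof cases
      case 1
      then have "count_list u c = 0" "count_list v c = 0" using su sv by (auto intro: count_notin)
      then show ?thesis using cw 1 by (simp add: rho0_def count_rep)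
    next
      case 2
      then have "count_list v c = 0" using sv by (auto intro: count_notin)
      then show ?thesis using cw 2 cuX by (simp add: rho0_def)
    next
      case 3
      then show ?thesis using cw cuY vp(5) i by (simp add: rho0_def)
    next
      case 4
      have "count_list u c = 0" using su 4 by (auto intro: count_notin)
      moreover have "count_list v' YY = count_list v YY + count_list v (2,2)"
        using count_map_sh[OF v2, of YY] vp(4) by simp
      ultimately show ?thesis using cw 4 vp(3) vp(5) i by (simp add: rho0_def)
    next
      case 5
      have j2: "2 \<le> j" using cc 5 c by (auto simp: cells2)
      have "count_list u c = 0" using su 5 by (auto intro: count_notin)
      moreover have "count_list (replicate (a 1) (1,1)) c = 0" using 5 by (auto intro: count_notin)
      moreover have "count_list v' (r, j - 1) = count_list v c"
      proof -
        have ne: "(r, j-1) \<noteq> YY" using 5 c j2 by auto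
        have "count_list (map sh v) (r, j-1) = count_list v (r, Suc (j-1))"
        proof -
          have "count_list (map sh v) (r, j-1) = (if (r, j-1) = YY then count_list v YY + count_list v (2,2)
                else count_list v (fst (r, j-1), Suc (snd (r, j-1))))"
            by (rule count_map_sh[OF v2]) (use j2 in simp)
          then show ?thesis using ne by (simp only: if_False fst_conv snd_conv)
        qed
        then show ?thesis using vp(4) c j2 by simp
      qed
      moreover have "(r, j-1) \<noteq> (1,1)" using 5 c j2 by auto
      moreover have "(r, j-1) \<in> cells [n1-1,n2-1]" using cc c j2 by (auto simp: cells2)
      ultimately have "count_list w c = rhop a b i (r, j-1)"
        using cw cv' w' unfolding W_def by auto
      then show ?thesis using c j2 5 by (auto simp: rhop_def rho0_def)
    qed
  qed
  have C: "\<forall>c d. prec c d \<longrightarrow> bef c d w"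
  proof (intro allI impI)
    fix c d assume p: "prec c d"
    have cd: "c \<noteq> d" using p by (auto simp: prec_def)
    have notcells: "c \<notin> cells [n1,n2]" if "d = (1,1)" using p that by (cases c) (auto simp: prec_def cells2)
    have b1: "bef c d (replicate (a 1) (1,1))" using bef_rep[OF cd] .
    have b2: "bef c d u"
    proof (cases "c \<in> set u \<and> d \<in> set u")
      case True
      then have "c \<in> {(1,2),YY}" "d \<in> {(1,2),YY}" using su by auto
      then have "\<not> prec c d" by (auto simp: prec_def)
      then show ?thesis using p by simp
    next
      case False then show ?thesis using bef_notin1 bef_notin2 by metis
    qed
    have b3: "bef c d v"
    proof (cases "c \<in> set v \<and> d \<in> set v")
      case False then show ?thesis using bef_notin1 bef_notin2 by metis
    next
      case True
      show ?thesis
      proof (cases "(c,d) = (YY,(2,2))")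
        case True then show ?thesis using vp(6) by simp
      next
        case False
        have "prec (sh c) (sh d)" using prec_sh[OF _ _ p False] True sv by auto
        then have "bef (sh c) (sh d) w'" using w' unfolding W_def by blast
        then have "bef (sh c) (sh d) v'" using vp(1) bef_suffix by metis
        then have "bef (sh c) (sh d) (map sh v)" using vp(4) by simp
        then show ?thesis by (rule bef_map)
      qed
    qed
    have x1: "d \<in> set u \<longrightarrow> c \<notin> set v"
    proof
      assume "d \<in> set u"
      then have "c = (1,1) \<or> c \<notin> cells [n1,n2]" using su p by (cases c) (auto simp: prec_def cells2)
      then show "c \<notin> set v" using sv by auto
    qed
    have x2: "d \<in> set (replicate (a 1) (1,1)) \<longrightarrow> c \<notin> set (u @ v)"
      using notcells su sv cells_ok by auto
    show "bef c d w" unfolding w_def bef_append using b1 b2 b3 x1 x2 by (auto simp: bef_append)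
  qed
  have "w \<in> W [n1,n2] (rho0 a b)" unfolding W_def using A B C by blast
  then show ?thesis unfolding w_def v_def v'_def .
qed

end



definition Psi :: "(nat \<Rightarrow> nat) \<Rightarrow> (nat \<Rightarrow> nat) \<Rightarrow> nat \<times> (nat \<times> nat) list \<times> (nat \<times> nat) list \<Rightarrow> (nat \<times> nat) list" where
  "Psi a b x = (case x of (i, u, w') \<Rightarrow> replicate (a 1) (1,1) @ u @ ush (b 1 - i) (drop (a 2) w'))"

lemma finite_W: "finite (W lam rho)"
proof -
  have "W lam rho \<subseteq> {w. set w \<subseteq> cells lam \<and> length w = (\<Sum>c\<in>cells lam. rho c)}"
    using length_W unfolding W_def by blast
  moreover have "finite {w. set w \<subseteq> cells lam \<and> length w = (\<Sum>c\<in>cells lam. rho c)}"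
    using finite_lists_length_eq[OF finite_cells] by blast
  ultimately show ?thesis by (rule finite_subset)
qed

lemma finite_II: "finite (II a i)"
proof -
  have "II a i \<subseteq> {u. set u \<subseteq> {(1,2),YY} \<and> length u = a 2 + i}" unfolding II_def by blast
  moreover have "finite {u. set u \<subseteq> {(1::nat,2::nat),YY} \<and> length u = a 2 + i}"
    using finite_lists_length_eq[of "{(1::nat,2::nat),YY}"] by blast
  ultimately show ?thesis by (rule finite_subset)
qed

context
  fixes n1 n2 :: nat and a b :: "nat \<Rightarrow> nat"
  assumes le: "n2 \<le> n1" and n2: "2 \<le> n2"
    and pa: "\<forall>j. 1 \<le> j \<and> j \<le> n1 \<longrightarrow> a j > 0"
    and pb: "\<forall>j. 1 \<le> j \<and> j \<le> n2 \<longrightarrow> b j > 0"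
begin

lemma a2pos: "a 2 > 0" using pa le n2 by auto

lemma Psi_inj: "inj_on (Psi a b) (SIGMA i:{0..b 1}. II a i \<times> W [n1-1,n2-1] (rhop a b i))"
proof (rule inj_onI)
  fix x y
  assume x: "x \<in> (SIGMA i:{0..b 1}. II a i \<times> W [n1-1,n2-1] (rhop a b i))"
    and y: "y \<in> (SIGMA i:{0..b 1}. II a i \<times> W [n1-1,n2-1] (rhop a b i))"
    and eq: "Psi a b x = Psi a b y"
  obtain i u w' where xx: "x = (i,u,w')" by (cases x) auto
  obtain i2 u2 w2 where yy: "y = (i2,u2,w2)" by (cases y) auto
  have i: "i \<le> b 1" and u: "u \<in> II a i" and w': "w' \<in> W [n1-1,n2-1] (rhop a b i)" using x xx by auto
  have i2: "i2 \<le> b 1" and u2: "u2 \<in> II a i2" and w2: "w2 \<in> W [n1-1,n2-1] (rhop a b i2)" using y yy by auto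
  note vp = vprops[OF le n2 pa pb i w']
  note vp2 = vprops[OF le n2 pa pb i2 w2]
  define v where "v = ush (b 1 - i) (drop (a 2) w')"
  define v2 where "v2 = ush (b 1 - i2) (drop (a 2) w2)"
  have e: "u @ v = u2 @ v2" using eq unfolding xx yy Psi_def v_def v2_def by simp
  have ne: "u \<noteq> []" "u2 \<noteq> []" using u u2 a2pos unfolding II_def by auto
  have la: "last u = (1,2)" "last u2 = (1,2)" using u u2 unfolding II_def by auto
  have nx: "(1,2) \<notin> set v" "(1,2) \<notin> set v2" using vp(7) vp2(7) unfolding v_def v2_def by auto
  have uu: "u = u2" by (rule last_split_unique[OF e ne la nx])
  then have vv: "v = v2" using e by simp
  have ii: "i = i2" using u u2 uu unfolding II_def by auto
  have "drop (a 2) w' = drop (a 2) w2" using vp(4) vp2(4) vv unfolding v_def v2_def by metis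
  then have "w' = w2" using vp(1) vp2(1) by metis
  then show "x = y" using xx yy uu ii by simp
qed

lemma sh_cells:
  assumes "c \<in> cells [n1,n2] - {(1,1),(1,2)}"
  shows "sh c \<in> cells [n1-1,n2-1] - {(1,1)}"
proof -
  obtain r j where c: "c = (r,j)" by (cases c)
  show ?thesis
  proof (cases "c = YY")
    case True then show ?thesis using le n2 by (simp add: sh_def cells2)
  next
    case False
    then have j: "2 \<le> j" using assms c by (auto simp: cells2)
    then have "sh c = (r, j - 1)" using c by (simp add: sh_def max_def)
    then show ?thesis using assms c j False by (auto simp: cells2)
  qed
qed

lemma sh_ord:
  assumes "c \<in> cells [n1,n2] - {(1,1),(1,2)}" "d \<in> cells [n1,n2] - {(1,1),(1,2)}" "prec (sh c) (sh d)"
  shows "c \<noteq> d \<and> fst c \<le> fst d \<and> snd c \<le> snd d"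
proof -
  obtain r j where c: "c = (r,j)" by (cases c)
  obtain r' j' where d: "d = (r',j')" by (cases d)
  show ?thesis using assms unfolding c d by (auto simp: cells2 prec_def sh_def)
qed

lemma Psi_surj:
  assumes w: "w \<in> W [n1,n2] (rho0 a b)"
  shows "\<exists>x\<in>(SIGMA i:{0..b 1}. II a i \<times> W [n1-1,n2-1] (rhop a b i)). Psi a b x = w"
proof -
  interpret T: twow n1 n2 "rho0 a b" w using twoA[OF le n2 pa pb w] .
  have r11: "rho0 a b (1,1) = a 1" by (simp add: rho0_def)
  define r where "r = drop (a 1) w"
  have fb: "w = replicate (a 1) (1,1) @ r" "(1,1) \<notin> set r" using T.first_block unfolding r11 r_def by auto
  have sub: "set w \<subseteq> cells [n1,n2]" using w unfolding W_def by blast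
  have cX: "(1,2) \<in> cells [n1,n2]" using le n2 by (simp add: cells2)
  have "(1,2) \<in> set w" using T.inset[OF cX] .
  then have "(1,2) \<in> set (replicate (a 1) (1,1) @ r)" using fb(1) by simp
  then have "(1,2) \<in> set r" by (auto split: if_splits)
  then obtain ys zs where r: "r = ys @ (1,2) # zs" and xz: "(1,2) \<notin> set zs" using split_list_last by metis
  define u where "u = ys @ [(1,2)]"
  define v where "v = zs"
  have wuv: "w = replicate (a 1) (1,1) @ u @ v" using fb r unfolding u_def v_def by simp
  have su: "set u \<subseteq> {(1,2), YY}"
  proof
    fix d assume du: "d \<in> set u"
    show "d \<in> {(1,2), YY}"
    proof (rule ccontr)
      assume nd: "d \<notin> {(1,2), YY}"
      then have dys: "d \<in> set ys" using du unfolding u_def by auto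
      then have dc: "d \<in> cells [n1,n2]" using sub fb r by auto
      have d11: "d \<noteq> (1,1)" using dys fb r by auto
      obtain r' j' where dd: "d = (r',j')" by (cases d)
      have "2 \<le> j'" "1 \<le> r'" using dc nd d11 dd by (auto simp: cells2)
      then have "bef (1,2) d w" unfolding dd using nd dd dc by (intro T.ord_bef[OF cX]) auto
      moreover have "w = (replicate (a 1) (1,1) @ ys) @ ((1,2) # zs)" using fb r by simp
      ultimately show False using dys by (auto simp: bef_append)
    qed
  qed
  define i where "i = count_list u YY"
  have cY: "count_list w YY = b 1" and cXw: "count_list w (1,2) = a 2" and c22: "count_list w (2,2) = b 2"
  proof -
    have "YY \<in> cells [n1,n2]" "(2,2) \<in> cells [n1,n2]" using le n2 by (auto simp: cells2)
    then show "count_list w YY = b 1" "count_list w (1,2) = a 2" "count_list w (2,2) = b 2"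
      using w cX unfolding W_def by (auto simp: rho0_def)
  qed
  have cuX: "count_list u (1,2) = a 2" using cXw xz unfolding wuv v_def by (simp add: count_rep)
  have cvY: "count_list v YY = b 1 - i" and ib: "i \<le> b 1" using cY unfolding wuv i_def by (auto simp: count_rep)
  have lu: "length u = a 2 + i" using count_two[OF su] cuX unfolding i_def by simp
  have uI: "u \<in> II a i" unfolding II_def using lu su i_def u_def by simp
  have sv: "set v \<subseteq> cells [n1,n2] - {(1,1),(1,2)}" using sub fb r xz unfolding v_def by auto
  have v2: "\<forall>c\<in>set v. c = YY \<or> 2 \<le> snd c" using vY2[OF le n2 pa pb sv] .
  have "prec YY (2,2)" by (simp add: prec_def)
  then have "bef YY (2,2) w" by (rule T.prec_bef)
  then have bv: "bef YY (2,2) v" using wuv bef_suffix by metis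
  define w' where "w' = replicate (a 2) (1,1) @ map sh v"
  have dw': "drop (a 2) w' = map sh v" unfolding w'_def by simp
  have uv: "ush (b 1 - i) (map sh v) = v" using ush_sh[OF v2 bv] cvY by simp
  have Psi: "Psi a b (i, u, w') = w" unfolding Psi_def using dw' uv wuv by simp
  have c11': "(1,1) \<in> cells [n1-1,n2-1]" using le n2 by (simp add: cells2)
  have A: "set w' \<subseteq> cells [n1-1,n2-1]"
  proof
    fix c assume "c \<in> set w'"
    then have "c = (1,1) \<or> (\<exists>d\<in>set v. c = sh d)" unfolding w'_def by auto
    then show "c \<in> cells [n1-1,n2-1]" using c11' sh_cells sv by blast
  qed
  have "(2,2) \<notin> set u" using su by auto
  then have cv22: "count_list v (2,2) = b 2" using c22 unfolding wuv by (simp add: count_rep)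
  have B: "\<forall>c\<in>cells [n1-1,n2-1]. count_list w' c = rhop a b i c"
  proof
    fix c' assume cc: "c' \<in> cells [n1-1,n2-1]"
    obtain r' j' where c': "c' = (r',j')" by (cases c')
    have j1: "1 \<le> j'" using cc c' by (simp add: cells2)
    have cm: "count_list (map sh v) c' = (if c' = YY then count_list v YY + count_list v (2,2)
                else count_list v (fst c', Suc (snd c')))"
      by (rule count_map_sh[OF v2]) (use j1 c' in simp)
    have cw': "count_list w' c' = count_list (replicate (a 2) (1,1)) c' + count_list (map sh v) c'"
      unfolding w'_def by simp
    consider "c' = YY" | "c' = (1,1)" | "c' \<noteq> YY" "c' \<noteq> (1,1)" by blast
    then show "count_list w' c' = rhop a b i c'"
    proof cases
      case 1 then show ?thesis using cm cw' cvY cv22 ib by (simp add: count_rep rhop_def)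
    next
      case 2
      have "count_list v (1,2) = 0" using sv by (auto intro: count_notin)
      then show ?thesis using cm cw' 2 by (simp add: count_rep rhop_def numeral_2_eq_2)
    next
      case 3
      have nin: "(r', Suc j') \<notin> {(1,1),(1,2),YY}" using 3 c' j1 by auto
      have inc: "(r', Suc j') \<in> cells [n1,n2]" using cc c' by (auto simp: cells2)
      have "count_list w (r', Suc j') = rho0 a b (r', Suc j')" using w inc unfolding W_def by blast
      moreover have "count_list w (r', Suc j') = count_list v (r', Suc j')"
        using nin su unfolding wuv by (auto simp: count_rep intro!: count_notin)
      ultimately have "count_list v (r', Suc j') = rho0 a b (r', Suc j')" by simp
      then show ?thesis using cm cw' 3 c' cc j1 by (auto simp: count_rep rhop_def rho0_def cells2)
    qed
  qed
  have C: "\<forall>c d. prec c d \<longrightarrow> bef c d w'"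
  proof (intro allI impI)
    fix c' d' assume p: "prec c' d'"
    have cd: "c' \<noteq> d'" using p by (auto simp: prec_def)
    have b1: "bef c' d' (replicate (a 2) (1,1))" using bef_rep[OF cd] .
    have x1: "d' \<in> set (replicate (a 2) (1,1)) \<longrightarrow> c' \<notin> set (map sh v)"
    proof
      assume "d' \<in> set (replicate (a 2) (1,1))"
      then have "d' = (1,1)" by simp
      then have "c' \<notin> cells [n1-1,n2-1]" using p by (cases c') (auto simp: prec_def cells2)
      then show "c' \<notin> set (map sh v)" using A unfolding w'_def by auto
    qed
    have b2: "bef c' d' (map sh v)"
    proof (rule bef_map2, intro ballI impI)
      fix c d assume c: "c \<in> set v" and d: "d \<in> set v" and sc: "sh c = c'" and sd: "sh d = d'"
      have cc: "c \<in> cells [n1,n2] - {(1,1),(1,2)}" and dc: "d \<in> cells [n1,n2] - {(1,1),(1,2)}" using c d sv by auto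
      have o: "c \<noteq> d \<and> fst c \<le> fst d \<and> snd c \<le> snd d" using sh_ord[OF cc dc] p sc sd by simp
      obtain r j where cr: "c = (r,j)" by (cases c)
      obtain r2 j2 where dr: "d = (r2,j2)" by (cases d)
      have "bef c d w" unfolding cr dr using o cc dc cr dr by (intro T.ord_bef) auto
      then show "bef c d v" using wuv bef_suffix by metis
    qed
    show "bef c' d' w'" unfolding w'_def using b1 b2 x1 by (simp add: bef_append)
  qed
  have "w' \<in> W [n1-1,n2-1] (rhop a b i)" unfolding W_def using A B C by blast
  then have "(i, u, w') \<in> (SIGMA i:{0..b 1}. II a i \<times> W [n1-1,n2-1] (rhop a b i))" using ib uI by simp
  then show ?thesis using Psi by blast
qed

end



theorem theorem6:
  fixes n1 n2 :: nat and a b :: "nat \<Rightarrow> nat"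
  assumes "n1 \<ge> n2" and "n2 \<ge> 2"
    and "\<forall>j. 1 \<le> j \<and> j \<le> n1 \<longrightarrow> a j > 0"
    and "\<forall>j. 1 \<le> j \<and> j \<le> n2 \<longrightarrow> b j > 0"
  shows "card (SVT [n1, n2] (\<lambda>(r, j). if r = 1 then a j else if r = 2 then b j else 0)) =
    (\<Sum>i = 0..b 1. (a 2 + i - 1 choose i) *
       card (SVT [n1 - 1, n2 - 1]
         (\<lambda>(r, j). if r = 1 then a (j + 1)
                   else if r = 2 then (if j = 1 then b 1 + b 2 - i else b (j + 1))
                   else 0)))"
proof -
  note A = assms(1) assms(2) assms(3) assms(4)
  define D where "D = (SIGMA i:{0..b 1}. II a i \<times> W [n1-1,n2-1] (rhop a b i))"
  have img: "Psi a b ` D \<subseteq> W [n1,n2] (rho0 a b)"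
  proof
    fix y assume "y \<in> Psi a b ` D"
    then obtain i u w' where "y = Psi a b (i,u,w')" "i \<le> b 1" "u \<in> II a i" "w' \<in> W [n1-1,n2-1] (rhop a b i)"
      unfolding D_def by auto
    then show "y \<in> W [n1,n2] (rho0 a b)" using Psi_in[OF A] unfolding Psi_def by simp
  qed
  have "bij_betw (Psi a b) D (W [n1,n2] (rho0 a b))"
    unfolding bij_betw_def D_def using Psi_inj[OF A] img Psi_surj[OF A] unfolding D_def by blast
  then have "card (W [n1,n2] (rho0 a b)) = card D" by (simp add: bij_betw_same_card)
  also have "\<dots> = (\<Sum>i\<in>{0..b 1}. card (II a i \<times> W [n1-1,n2-1] (rhop a b i)))"
    unfolding D_def by (rule card_SigmaI) (auto intro: finite_II finite_W)
  also have "\<dots> = (\<Sum>i\<in>{0..b 1}. (a 2 + i - 1 choose i) * card (SVT [n1-1,n2-1] (rhop a b i)))"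
  proof (rule sum.cong)
    fix i assume "i \<in> {0..b 1}"
    have "card (II a i) = (a 2 + i - 1 choose i)" using card_II a2pos[OF A] by blast
    then show "card (II a i \<times> W [n1-1,n2-1] (rhop a b i)) = (a 2 + i - 1 choose i) * card (SVT [n1-1,n2-1] (rhop a b i))"
      by (simp add: card_cartesian_product card_SVT_W)
  qed simp
  finally have "card (SVT [n1,n2] (rho0 a b)) = (\<Sum>i\<in>{0..b 1}. (a 2 + i - 1 choose i) * card (SVT [n1-1,n2-1] (rhop a b i)))"
    by (simp add: card_SVT_W)
  then show ?thesis unfolding rho0_def rhop_def .
qed


end
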